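(* Let $F:X\to X$ be an interaction, let $S\in st_0(\Gamma_F)$, and let $\mathcal{X}_SF$ be the expansion of $F$ over $S$. If $\tilde\Lambda_{pq}$ are constants satisfying the Lipschitz condition for $\mathcal{X}_SF$ with $\rho(\tilde\Lambda)<1$, then $F$ has a globally attracting fixed point, i.e. there exists $\bar x\in X$ such that $F^k(y)\to\bar x$ as $k\to\infty$ for every $y\in X$.
   Context: Let $\mathcal{I}=\{1,\dots,n\}$, $(X_i,d)$ compact metric spaces, $X=\prod_iX_i$ with $d_{\max}(x,y)=\max_id(x_i,y_i)$. An interaction $F:X\to X$ is given by nonempty $\mathcal{I}_j\subseteq\mathcal{I}$ and continuous $F_j:\prod_{i\in\mathcal{I}_j}X_i\to X_j$ with $F(x)_j=F_j(\{x_i\}_{i\in\mathcal{I}_j})$, together with constants $\Lambda_{ij}\ge0$ ($\Lambda_{ij}=0$ if $i\notin\mathcal{I}_j$) with $d(F_j(\{x_i\}),F_j(\{y_i\}))\le\sum_{i\in\mathcal{I}_j}\Lambda_{ij}d(x_i,y_i)$. For a map $G$ on a finite product $\prod_pY_p$ of compact metric spaces whose $q$-th component is a continuous function of the coordinates in a set $\mathcal{J}_q$, constants $\tilde\Lambda_{pq}\ge0$ ($=0$ for $p\notin\mathcal{J}_q$) satisfy the Lipschitz condition if $d(G(u)_q,G(w)_q)\le\sum_{p}\tilde\Lambda_{pq}d(u_p,w_p)$ for all $u,w$. $\rho$ is spectral radius. The graph of interactions $\Gamma_F$ has vertices $v_1,\dots,v_n$ and an edge $v_i\to v_j$ of weight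 $\Lambda_{ij}$ when $i\in\mathcal{I}_j$. $st_0(\Gamma_F)$ is the set of nonempty $S\subseteq\{v_1,\dots,v_n\}$ such that the subgraph induced on the complement of $S$ has no directed cycles and no loops; $\mathcal{I}_S=\{j:v_j\in S\}$. A branch is a path of distinct vertices $u_1,\dots,u_m$, or a cycle ($u_1=u_m$, others distinct), with $u_1,u_m\in S$ and interior vertices $u_2,\dots,u_{m-1}\notin S$; $|\beta|=m$; $\mathcal{B}_S(\Gamma_F)$ denotes the set of branches. Expansion $\mathcal{X}_SF$: for each branch $\beta$ with $r=|\beta|-2\ge1$ introduce new coordinates $\eta(\beta,1),\dots,\eta(\beta,r)$ (distinct new indices), each with state space $X_{a_0}$, $v_{a_0}$ the initial vertex of $\beta$; $B_S$ is the product of these spaces and $X|_S=\prod_{j\in\mathcal{I}_S}X_j$. For $j\in\mathcal{I}_S$, start from $F_j(\{x_i\}_{i\in\mathcal{I}_j})$ and repeatedly replace each occurring variable $x_i$ with $i\notin\mathcal{I}_S$ by $F_i(\{x_k\}_{k\in\mathcal{I}_i})$ until only variables with indices in $\mathcal{I}_S$ remain; each occurrence of $x_{a_0}$ nested as $F_j(\dots F_{a_r}(\dots F_{a_1}(\dots x_{a_0}\dots)))$ corresponds to the branch $\beta=v_{a_0},v_{a_1},\dots,v_{a_r},v_j$ and is replaced by $x_{\eta(\beta,r)}$ if $r\ge1$ (unchanged if $r=0$); the result is $\tilde F_j$. Then $\mathcal{X}_SF:X|_S\times B_S\to X|_S\times B_S$ has components $(\mathcal{X}_SF)_j=\tilde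 F_j$ ($j\in\mathcal{I}_S$), $(\mathcal{X}_SF)_{\eta(\beta,1)}=x_{a_0}$, and $(\mathcal{X}_SF)_{\eta(\beta,\ell)}=x_{\eta(\beta,\ell-1)}$ for $2\le\ell\le|\beta|-2$. *)

theory Defs
  imports "HOL-Analysis.Analysis" "Jordan_Normal_Form.Spectral_Radius"
begin

text \<open>Coordinates are indexed by 1..n; all state spaces X i are subsets of one
  ambient metric space type 'a. A point of X = prod_i X_i is an extensional
  function in PiE {1..n} X.  The component F_j is represented by f j, a function
  on PiE (I j) X (extensional functions on I j).\<close>

definition is_interaction ::
  "nat \<Rightarrow> (nat \<Rightarrow> 'a::metric_space set) \<Rightarrow> (nat \<Rightarrow> nat set) \<Rightarrow>
   (nat \<Rightarrow> (nat \<Rightarrow> 'a) \<Rightarrow> 'a) \<Rightarrow> (nat \<Rightarrow> nat \<Rightarrow> real) \<Rightarrow> bool" where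
  "is_interaction n X I f Lam \<longleftrightarrow>
     (\<forall>j\<in>{1..n}. I j \<noteq> {} \<and> I j \<subseteq> {1..n} \<and>
        continuous_on (PiE (I j) X) (f j) \<and> f j ` PiE (I j) X \<subseteq> X j \<and>
        (\<forall>i\<in>{1..n}. Lam i j \<ge> 0 \<and> (i \<notin> I j \<longrightarrow> Lam i j = 0)) \<and>
        (\<forall>x\<in>PiE (I j) X. \<forall>y\<in>PiE (I j) X.
            dist (f j x) (f j y) \<le> (\<Sum>i\<in>I j. Lam i j * dist (x i) (y i))))"

definition interaction_map ::
  "nat \<Rightarrow> (nat \<Rightarrow> nat set) \<Rightarrow> (nat \<Rightarrow> (nat \<Rightarrow> 'a) \<Rightarrow> 'a) \<Rightarrow> (nat \<Rightarrow> 'a) \<Rightarrow> (nat \<Rightarrow> 'a)" where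
  "interaction_map n I f x = restrict (\<lambda>j. f j (restrict x (I j))) {1..n}"

definition dmax :: "nat \<Rightarrow> (nat \<Rightarrow> 'a::metric_space) \<Rightarrow> (nat \<Rightarrow> 'a) \<Rightarrow> real" where
  "dmax n x y = Max ((\<lambda>i. dist (x i) (y i)) ` {1..n})"

text \<open>Edges of the graph of interactions: (i,j) means v_i \<rightarrow> v_j, i.e. i \<in> I_j.\<close>
definition graph_edges :: "nat \<Rightarrow> (nat \<Rightarrow> nat set) \<Rightarrow> (nat \<times> nat) set" where
  "graph_edges n I = {(i, j). j \<in> {1..n} \<and> i \<in> I j}"

definition st0 :: "nat \<Rightarrow> (nat \<Rightarrow> nat set) \<Rightarrow> nat set \<Rightarrow> bool" where
  "st0 n I S \<longleftrightarrow> S \<noteq> {} \<and> S \<subseteq> {1..n} \<and>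
     acyclic (graph_edges n I \<inter> (({1..n} - S) \<times> ({1..n} - S)))"

definition is_branch :: "nat \<Rightarrow> (nat \<Rightarrow> nat set) \<Rightarrow> nat set \<Rightarrow> nat list \<Rightarrow> bool" where
  "is_branch n I S \<beta> \<longleftrightarrow> length \<beta> \<ge> 2 \<and>
     (\<forall>k. Suc k < length \<beta> \<longrightarrow> (\<beta> ! k, \<beta> ! Suc k) \<in> graph_edges n I) \<and>
     hd \<beta> \<in> S \<and> last \<beta> \<in> S \<and>
     (\<forall>k. 0 < k \<and> k < length \<beta> - 1 \<longrightarrow> \<beta> ! k \<notin> S) \<and>
     (distinct \<beta> \<or> (hd \<beta> = last \<beta> \<and> distinct (tl \<beta>)))"

definition branches :: "nat \<Rightarrow> (nat \<Rightarrow> nat set) \<Rightarrow> nat set \<Rightarrow> nat list set" where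
  "branches n I S = {\<beta>. is_branch n I S \<beta>}"

text \<open>Coordinates of the expansion: Inl j for j \<in> I_S, Inr (beta, l) for eta(beta,l).\<close>
type_synonym eidx = "nat + (nat list \<times> nat)"

definition exp_idx :: "nat \<Rightarrow> (nat \<Rightarrow> nat set) \<Rightarrow> nat set \<Rightarrow> eidx set" where
  "exp_idx n I S = Inl ` S \<union>
     {Inr (\<beta>, l) | \<beta> l. \<beta> \<in> branches n I S \<and> 1 \<le> l \<and> l \<le> length \<beta> - 2}"

definition exp_fam :: "(nat \<Rightarrow> 'a set) \<Rightarrow> eidx \<Rightarrow> 'a set" where
  "exp_fam X q = (case q of Inl j \<Rightarrow> X j | Inr (\<beta>, l) \<Rightarrow> X (hd \<beta>))"

text \<open>Recursive unfolding: exp_term S I f fuel p z is the value of the occurrence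
  of the variable x_(hd p) reached along the path p = [a_0, a_1, ..., a_r, j]
  (most recently substituted vertex first).  The fuel argument only guarantees termination; the
  fuel n+1 used below always suffices since the complement of S is acyclic.\<close>
fun exp_term :: "nat set \<Rightarrow> (nat \<Rightarrow> nat set) \<Rightarrow> (nat \<Rightarrow> (nat \<Rightarrow> 'a) \<Rightarrow> 'a) \<Rightarrow>
    nat \<Rightarrow> nat list \<Rightarrow> (eidx \<Rightarrow> 'a) \<Rightarrow> 'a" where
  "exp_term S I f 0 p z = undefined"
| "exp_term S I f (Suc N) p z =
     (if hd p \<in> S
      then (if length p \<le> 2 then z (Inl (hd p)) else z (Inr (p, length p - 2)))
      else f (hd p) (restrict (\<lambda>k. exp_term S I f N (k # p) z) (I (hd p))))"

definition tilde_F :: "nat \<Rightarrow> nat set \<Rightarrow> (nat \<Rightarrow> nat set) \<Rightarrow> (nat \<Rightarrow> (nat \<Rightarrow> 'a) \<Rightarrow> 'a) \<Rightarrow>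
    nat \<Rightarrow> (eidx \<Rightarrow> 'a) \<Rightarrow> 'a" where
  "tilde_F n S I f j z = f j (restrict (\<lambda>k. exp_term S I f (n + 1) [k, j] z) (I j))"

definition expansion :: "nat \<Rightarrow> nat set \<Rightarrow> (nat \<Rightarrow> nat set) \<Rightarrow> (nat \<Rightarrow> (nat \<Rightarrow> 'a) \<Rightarrow> 'a) \<Rightarrow>
    (eidx \<Rightarrow> 'a) \<Rightarrow> (eidx \<Rightarrow> 'a)" where
  "expansion n S I f z = restrict (\<lambda>q. case q of
       Inl j \<Rightarrow> tilde_F n S I f j z
     | Inr (\<beta>, l) \<Rightarrow> (if l = 1 then z (Inl (hd \<beta>)) else z (Inr (\<beta>, l - 1))))
     (exp_idx n I S)"

text \<open>The coordinates J_q of which the q-th component of the expansion is a function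
  (the variables occurring in its defining expression).\<close>
definition exp_deps :: "nat \<Rightarrow> (nat \<Rightarrow> nat set) \<Rightarrow> nat set \<Rightarrow> eidx \<Rightarrow> eidx set" where
  "exp_deps n I S q = (case q of
       Inl j \<Rightarrow> {Inl (hd \<beta>) | \<beta>. \<beta> \<in> branches n I S \<and> last \<beta> = j \<and> length \<beta> = 2}
              \<union> {Inr (\<beta>, length \<beta> - 2) | \<beta>. \<beta> \<in> branches n I S \<and> last \<beta> = j \<and> length \<beta> \<ge> 3}
     | Inr (\<beta>, l) \<Rightarrow> (if l = 1 then {Inl (hd \<beta>)} else {Inr (\<beta>, l - 1)}))"

definition lipschitz_constants ::
  "'k set \<Rightarrow> ('k \<Rightarrow> 'a::metric_space set) \<Rightarrow> ('k \<Rightarrow> 'k set) \<Rightarrow> (('k \<Rightarrow> 'a) \<Rightarrow> ('k \<Rightarrow> 'a)) \<Rightarrow>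
   ('k \<Rightarrow> 'k \<Rightarrow> real) \<Rightarrow> bool" where
  "lipschitz_constants Idx Y J G L \<longleftrightarrow>
     (\<forall>p\<in>Idx. \<forall>q\<in>Idx. L p q \<ge> 0 \<and> (p \<notin> J q \<longrightarrow> L p q = 0)) \<and>
     (\<forall>u\<in>PiE Idx Y. \<forall>w\<in>PiE Idx Y. \<forall>q\<in>Idx.
        dist (G u q) (G w q) \<le> (\<Sum>p\<in>Idx. L p q * dist (u p) (w p)))"

text \<open>Spectral radius of a real matrix indexed by a finite set Idx (via an arbitrary
  enumeration of Idx; the spectral radius does not depend on it).\<close>
definition idx_enum :: "'k set \<Rightarrow> nat \<Rightarrow> 'k" where
  "idx_enum Idx = (SOME e. bij_betw e {..<card Idx} Idx)"

definition spec_rad :: "'k set \<Rightarrow> ('k \<Rightarrow> 'k \<Rightarrow> real) \<Rightarrow> real" where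
  "spec_rad Idx L = spectral_radius
     (mat (card Idx) (card Idx) (\<lambda>(a, b). complex_of_real (L (idx_enum Idx a) (idx_enum Idx b))))"

end

theory Submission
  imports Defs
begin



fun Rpow :: "(nat \<Rightarrow> nat \<Rightarrow> real) \<Rightarrow> nat \<Rightarrow> nat \<Rightarrow> nat \<Rightarrow> nat \<Rightarrow> real" where
  "Rpow M N 0 a b = (if a = b then 1 else 0)"
| "Rpow M N (Suc m) a b = (\<Sum>c<N. Rpow M N m a c * M c b)"

lemma spec_decay:
  fixes M :: "nat \<Rightarrow> nat \<Rightarrow> real"
  assumes N: "N > 0"
    and sr: "spectral_radius (mat N N (\<lambda>(a,b). complex_of_real (M a b))) < 1"
  shows "\<exists>c r. 0 \<le> c \<and> 0 < r \<and> r < 1 \<and> (\<forall>m a b. a < N \<longrightarrow> b < N \<longrightarrow> Rpow M N m a b \<le> c * r^m)"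
proof -
  define A where "A = mat N N (\<lambda>(a,b). complex_of_real (M a b))"
  have A: "A \<in> carrier_mat N N" unfolding A_def by auto
  define \<rho> where "\<rho> = spectral_radius A"
  have rho0: "\<rho> \<ge> 0"
    using spectral_radius_mem_max(1)[OF A N] unfolding \<rho>_def by auto
  define r where "r = (\<rho> + 1) / 2"
  have r: "0 < r" "r < 1" "\<rho> < r" using rho0 sr unfolding r_def \<rho>_def A_def by auto
  define B where "B = mat N N (\<lambda>(a,b). complex_of_real (M a b / r))"
  have B: "B \<in> carrier_mat N N" unfolding B_def by auto
  have "spectral_radius B < 1"
  proof -
    obtain \<mu> where mu: "\<mu> \<in> spectrum B" "spectral_radius B = norm \<mu>"
      using spectral_radius_mem_max(1)[OF B N] by auto
    then obtain v where ev: "eigenvector B v \<mu>"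
      unfolding spectrum_def eigenvalue_def by auto
    hence v: "v \<in> carrier_vec N" "v \<noteq> 0\<^sub>v N" "B *\<^sub>v v = \<mu> \<cdot>\<^sub>v v"
      unfolding eigenvector_def using B by auto
    have "A *\<^sub>v v = (complex_of_real r * \<mu>) \<cdot>\<^sub>v v"
    proof (rule eq_vecI)
      fix i assume "i < dim_vec ((complex_of_real r * \<mu>) \<cdot>\<^sub>v v)"
      hence i: "i < N" using v by auto
      have "(B *\<^sub>v v) $ i = (\<mu> \<cdot>\<^sub>v v) $ i" using v by simp
      hence eq: "(\<Sum>j<N. complex_of_real (M i j / r) * v $ j) = \<mu> * v $ i"
        using i v B unfolding B_def by (auto simp: scalar_prod_def atLeast0LessThan)
      have "(A *\<^sub>v v) $ i = (\<Sum>j<N. complex_of_real (M i j) * v $ j)"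
        using i v unfolding A_def by (auto simp: scalar_prod_def atLeast0LessThan)
      also have "\<dots> = complex_of_real r * (\<Sum>j<N. complex_of_real (M i j / r) * v $ j)"
        using r by (simp add: sum_distrib_left field_simps)
      also have "\<dots> = ((complex_of_real r * \<mu>) \<cdot>\<^sub>v v) $ i" using eq i v by simp
      finally show "(A *\<^sub>v v) $ i = ((complex_of_real r * \<mu>) \<cdot>\<^sub>v v) $ i" .
    qed (use v A in auto)
    hence "eigenvector A v (complex_of_real r * \<mu>)"
      using v A unfolding eigenvector_def by auto
    hence "norm (complex_of_real r * \<mu>) \<in> norm ` spectrum A"
      unfolding spectrum_def eigenvalue_def by auto
    from spectral_radius_mem_max(2)[OF A N this]
    have "r * norm \<mu> \<le> \<rho>" using r unfolding \<rho>_def by (simp add: norm_mult)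
    hence "r * norm \<mu> < r * 1" using r by linarith
    hence "norm \<mu> < 1" using r by (simp only: mult_less_cancel_left_pos)
    thus ?thesis using mu by simp
  qed
  from spectral_radius_jnf_norm_bound_less_1_upper_triangular[OF B this]
  obtain c where c: "\<And>k. norm_bound (B ^\<^sub>m k) c" by auto
  have c0: "0 \<le> c"
  proof -
    have "\<forall>i<N. \<forall>j<N. cmod (if i = j then 1 else (0::complex)) \<le> c" using c[of 0] N B unfolding norm_bound_def by auto
    hence "cmod (1::complex) \<le> c" using N by force
    thus ?thesis by simp
  qed
  have pw: "\<forall>a b. a < N \<longrightarrow> b < N \<longrightarrow> (B ^\<^sub>m m) $$ (a,b) = complex_of_real (Rpow M N m a b / r^m)" for m
  proof (induction m)
    case 0
    then show ?case using B by auto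
  next
    case (Suc m)
    show ?case
    proof (intro allI impI)
      fix a b assume ab: "a < N" "b < N"
      have "(B ^\<^sub>m Suc m) $$ (a,b) = (\<Sum>c<N. (B ^\<^sub>m m) $$ (a,c) * B $$ (c,b))"
        using ab B by (auto simp: scalar_prod_def atLeast0LessThan)
      also have "\<dots> = (\<Sum>c<N. complex_of_real (Rpow M N m a c / r^m * (M c b / r)))"
        using Suc ab unfolding B_def by (intro sum.cong) auto
      also have "\<dots> = complex_of_real (\<Sum>c<N. Rpow M N m a c / r^m * (M c b / r))"
        by simp
      also have "(\<Sum>c<N. Rpow M N m a c / r^m * (M c b / r)) = Rpow M N (Suc m) a b / r ^ Suc m"
        using r by (simp add: sum_divide_distrib field_simps)
      finally show "(B ^\<^sub>m Suc m) $$ (a,b) = complex_of_real (Rpow M N (Suc m) a b / r ^ Suc m)" .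
    qed
  qed
  have "Rpow M N m a b \<le> c * r^m" if "a < N" "b < N" for m a b
  proof -
    have "norm ((B ^\<^sub>m m) $$ (a,b)) \<le> c" using c[of m] that B unfolding norm_bound_def by auto
    moreover have e: "(B ^\<^sub>m m) $$ (a,b) = complex_of_real (Rpow M N m a b / r^m)" using pw that by blast
    ultimately have "\<bar>Rpow M N m a b / r^m\<bar> \<le> c" by (metis norm_of_real)
    hence "Rpow M N m a b / r^m \<le> c" by linarith
    thus ?thesis using r by (simp add: divide_le_eq mult.commute)
  qed
  thus ?thesis using c0 r by blast
qed


lemma decay_bound:
  fixes E :: "'k set" and e :: "nat \<Rightarrow> 'k" and L :: "'k \<Rightarrow> 'k \<Rightarrow> real" and d :: "nat \<Rightarrow> 'k \<Rightarrow> real"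
  assumes bij: "bij_betw e {..<N} E"
    and Lnn: "\<forall>p\<in>E. \<forall>q\<in>E. L p q \<ge> 0"
    and step: "\<forall>m. \<forall>q\<in>E. d (Suc m) q \<le> (\<Sum>p\<in>E. L p q * d m p)"
    and d0: "\<forall>q\<in>E. d 0 q \<le> D"
    and D: "D \<ge> 0"
  shows "\<forall>b<N. d m (e b) \<le> D * (\<Sum>a<N. Rpow (\<lambda>a b. L (e a) (e b)) N m a b)"
proof (induction m)
  case 0
  show ?case
  proof (intro allI impI)
    fix b assume b: "b < N"
    have "(\<Sum>a<N. Rpow (\<lambda>a b. L (e a) (e b)) N 0 a b) = 1"
      using b by (simp add: sum.delta)
    moreover have "e b \<in> E" using bij b by (auto simp: bij_betw_def)
    ultimately show "d 0 (e b) \<le> D * (\<Sum>a<N. Rpow (\<lambda>a b. L (e a) (e b)) N 0 a b)" using d0 by simp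
  qed
next
  case (Suc m)
  let ?R = "Rpow (\<lambda>a b. L (e a) (e b)) N"
  show ?case
  proof (intro allI impI)
    fix b assume b: "b < N"
    have eb: "e b \<in> E" using bij b by (auto simp: bij_betw_def)
    have ec: "\<And>c. c < N \<Longrightarrow> e c \<in> E" using bij by (auto simp: bij_betw_def)
    have "d (Suc m) (e b) \<le> (\<Sum>p\<in>E. L p (e b) * d m p)" using step eb by blast
    also have "\<dots> = (\<Sum>c<N. L (e c) (e b) * d m (e c))"
      using sum.reindex_bij_betw[OF bij, of "\<lambda>p. L p (e b) * d m p"] by simp
    also have "\<dots> \<le> (\<Sum>c<N. L (e c) (e b) * (D * (\<Sum>a<N. ?R m a c)))"
      apply (rule sum_mono)
      apply (rule mult_left_mono)
      using Suc ec eb Lnn by auto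
    also have "\<dots> = (\<Sum>c<N. \<Sum>a<N. D * (?R m a c * L (e c) (e b)))"
      by (simp add: sum_distrib_left sum_distrib_right mult_ac)
    also have "\<dots> = (\<Sum>a<N. \<Sum>c<N. D * (?R m a c * L (e c) (e b)))"
      by (rule sum.swap)
    also have "\<dots> = D * (\<Sum>a<N. \<Sum>c<N. ?R m a c * L (e c) (e b))"
      by (simp add: sum_distrib_left)
    also have "\<dots> = D * (\<Sum>a<N. ?R (Suc m) a b)" by simp
    finally show "d (Suc m) (e b) \<le> D * (\<Sum>a<N. ?R (Suc m) a b)" .
  qed
qed




locale thm9 =
  fixes n :: nat and X :: "nat \<Rightarrow> 'a::metric_space set" and I :: "nat \<Rightarrow> nat set"
    and f :: "nat \<Rightarrow> (nat \<Rightarrow> 'a) \<Rightarrow> 'a" and Lam :: "nat \<Rightarrow> nat \<Rightarrow> real"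
    and S :: "nat set" and L :: "eidx \<Rightarrow> eidx \<Rightarrow> real"
  assumes cpt: "\<forall>i\<in>{1..n}. compact (X i) \<and> X i \<noteq> {}"
    and inter: "is_interaction n X I f Lam"
    and st: "st0 n I S"
    and lip: "lipschitz_constants (exp_idx n I S) (exp_fam X) (exp_deps n I S) (expansion n S I f) L"
    and spr: "spec_rad (exp_idx n I S) L < 1"
begin

abbreviation "Fm \<equiv> interaction_map n I f"
abbreviation "XX \<equiv> PiE {1..n} X"
abbreviation "E \<equiv> exp_idx n I S"
abbreviation "GE \<equiv> graph_edges n I"

lemma I_sub: "j \<in> {1..n} \<Longrightarrow> I j \<subseteq> {1..n}"
  using inter unfolding is_interaction_def by blast

lemma f_in: "j \<in> {1..n} \<Longrightarrow> x \<in> PiE (I j) X \<Longrightarrow> f j x \<in> X j"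
  using inter unfolding is_interaction_def by blast

lemma f_lip: "j \<in> {1..n} \<Longrightarrow> x \<in> PiE (I j) X \<Longrightarrow> y \<in> PiE (I j) X \<Longrightarrow>
   dist (f j x) (f j y) \<le> (\<Sum>i\<in>I j. Lam i j * dist (x i) (y i))"
  using inter unfolding is_interaction_def by blast

lemma Lam_nn: "i \<in> {1..n} \<Longrightarrow> j \<in> {1..n} \<Longrightarrow> Lam i j \<ge> 0"
  using inter unfolding is_interaction_def by blast

lemma S_sub: "S \<subseteq> {1..n}" and S_ne: "S \<noteq> {}"
  using st unfolding st0_def by auto

lemma n_pos: "n \<ge> 1"
  using S_ne S_sub by (cases n) auto

lemma acyc: "acyclic (GE \<inter> (({1..n} - S) \<times> ({1..n} - S)))"
  using st unfolding st0_def by auto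

lemma GE_iff: "(a, b) \<in> GE \<longleftrightarrow> b \<in> {1..n} \<and> a \<in> I b"
  unfolding graph_edges_def by auto

lemma restrict_in: "x \<in> XX \<Longrightarrow> j \<in> {1..n} \<Longrightarrow> restrict x (I j) \<in> PiE (I j) X"
  unfolding restrict_PiE_iff using I_sub PiE_mem by blast

lemma F_in: "x \<in> XX \<Longrightarrow> Fm x \<in> XX"
  unfolding interaction_map_def restrict_PiE_iff using f_in restrict_in by blast

lemma Fpow_in: "x \<in> XX \<Longrightarrow> (Fm ^^ k) x \<in> XX"
proof (induction k)
  case 0 then show ?case by simp
next
  case (Suc k)
  have "Fm ((Fm ^^ k) x) \<in> XX" by (rule F_in[OF Suc.IH[OF Suc.prems]])
  thus ?case by simp
qed

lemma Fpow_Suc: "j \<in> {1..n} \<Longrightarrow> (Fm ^^ Suc t) y j = f j (restrict ((Fm ^^ t) y) (I j))"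
  by (simp add: interaction_map_def)

lemma E_Inl: "Inl j \<in> E \<longleftrightarrow> j \<in> S"
  unfolding exp_idx_def by auto

lemma E_Inr: "Inr (\<beta>, l) \<in> E \<longleftrightarrow> \<beta> \<in> branches n I S \<and> 1 \<le> l \<and> l \<le> length \<beta> - 2"
  unfolding exp_idx_def by auto

definition good :: "nat list \<Rightarrow> bool" where
  "good p \<longleftrightarrow> length p \<ge> 2 \<and> last p \<in> S \<and>
     (\<forall>k. Suc k < length p \<longrightarrow> (p ! k, p ! Suc k) \<in> GE) \<and>
     (\<forall>k. 0 < k \<and> k < length p - 1 \<longrightarrow> p ! k \<notin> S) \<and>
     (hd p \<notin> S \<longrightarrow> distinct (butlast p)) \<and> distinct (tl (butlast p))"

lemma good_set: assumes "good p" shows "set p \<subseteq> {1..n}"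
proof
  fix x assume "x \<in> set p"
  then obtain k where k: "k < length p" "x = p ! k" by (auto simp: in_set_conv_nth)
  show "x \<in> {1..n}"
  proof (cases "Suc k < length p")
    case True
    hence "(p ! k, p ! Suc k) \<in> GE" using assms unfolding good_def by blast
    hence "p ! Suc k \<in> {1..n}" "p ! k \<in> I (p ! Suc k)" by (auto simp: GE_iff)
    thus ?thesis using k I_sub by blast
  next
    case False
    hence "Suc (k - 1) < length p" "Suc (k-1) = k" using assms k unfolding good_def by auto
    hence "(p ! (k-1), p ! k) \<in> GE" using assms unfolding good_def by metis
    thus ?thesis using k by (auto simp: GE_iff)
  qed
qed

lemma card_C: "card ({1..n} - S) \<le> n - 1"
proof -
  have "card S \<ge> 1" using S_ne S_sub
    by (metis One_nat_def Suc_leI card_gt_0_iff finite_atLeastAtMost finite_subset)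
  thus ?thesis using S_sub by (simp add: card_Diff_subset finite_subset)
qed

lemma good_len: assumes "good p" shows "length p \<le> n + 1" "hd p \<notin> S \<Longrightarrow> length p \<le> n"
proof -
  have len: "length p \<ge> 2" using assms unfolding good_def by auto
  have sp: "set p \<subseteq> {1..n}" using good_set[OF assms] .
  have "set (tl (butlast p)) \<subseteq> {1..n} - S"
  proof
    fix x assume "x \<in> set (tl (butlast p))"
    then obtain i where i0: "i < length (tl (butlast p))" "x = tl (butlast p) ! i" by (metis in_set_conv_nth)
    hence i: "i < length p - 2" "x = tl (butlast p) ! i" by auto
    hence x: "x = p ! Suc i" using len by (simp add: nth_tl nth_butlast)
    hence "x \<notin> S" using assms i unfolding good_def by auto
    moreover have "x \<in> set p" using x i by auto
    ultimately show "x \<in> {1..n} - S" using sp by auto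
  qed
  hence "card (set (tl (butlast p))) \<le> n - 1" using card_C
    by (meson card_mono finite_Diff finite_atLeastAtMost le_trans)
  moreover have "card (set (tl (butlast p))) = length p - 2"
  proof -
    have "distinct (tl (butlast p))" using assms unfolding good_def by blast
    from distinct_card[OF this] show ?thesis by simp
  qed
  ultimately show "length p \<le> n + 1" using len n_pos by linarith
  assume h: "hd p \<notin> S"
  have "set (butlast p) \<subseteq> {1..n} - S"
  proof
    fix x assume "x \<in> set (butlast p)"
    then obtain i where i0: "i < length (butlast p)" "x = butlast p ! i" by (metis in_set_conv_nth)
    hence i: "i < length p - 1" "x = butlast p ! i" by auto
    hence x: "x = p ! i" by (simp add: nth_butlast)
    have "x \<notin> S"
    proof (cases i)
      case 0 thus ?thesis using h x len by (cases p) auto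
    next
      case (Suc j) thus ?thesis using assms i x unfolding good_def by auto
    qed
    moreover have "x \<in> set p" using x i by auto
    ultimately show "x \<in> {1..n} - S" using sp by auto
  qed
  hence "card (set (butlast p)) \<le> n - 1" using card_C
    by (meson card_mono finite_Diff finite_atLeastAtMost le_trans)
  moreover have "card (set (butlast p)) = length p - 1"
  proof -
    have "distinct (butlast p)" using assms h unfolding good_def by blast
    from distinct_card[OF this] show ?thesis by simp
  qed
  ultimately show "length p \<le> n" using len n_pos by linarith
qed


lemma good_interior: assumes "good p" "x \<in> set (tl (butlast p))" shows "x \<notin> S"
proof -
  have len: "length p \<ge> 2" using assms unfolding good_def by auto
  obtain i where i0: "i < length (tl (butlast p))" "x = tl (butlast p) ! i"
    using assms(2) by (metis in_set_conv_nth)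
  hence i: "i < length p - 2" by auto
  hence x: "x = p ! Suc i" using len i0 by (simp add: nth_tl nth_butlast)
  thus ?thesis using assms i unfolding good_def by auto
qed

abbreviation "RC \<equiv> GE \<inter> (({1..n} - S) \<times> ({1..n} - S))"

lemma good_reach: assumes g: "good p" and h: "hd p \<notin> S"
  shows "i < length p - 1 \<Longrightarrow> (hd p, p ! i) \<in> RC\<^sup>*"
proof (induction i)
  case 0
  have "p \<noteq> []" using g unfolding good_def by auto
  thus ?case by (simp add: hd_conv_nth)
next
  case (Suc i)
  have e: "(p ! i, p ! Suc i) \<in> GE" using g Suc.prems unfolding good_def by auto
  have sp: "set p \<subseteq> {1..n}" using good_set[OF g] .
  have "p ! i \<notin> S"
  proof (cases i)
    case 0 thus ?thesis using h g unfolding good_def by (cases p) auto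
  next
    case (Suc j) thus ?thesis using g Suc.prems unfolding good_def by auto
  qed
  moreover have "p ! Suc i \<notin> S" using g Suc.prems unfolding good_def by auto
  moreover have "p ! i \<in> set p" "p ! Suc i \<in> set p" using Suc.prems by (auto intro!: nth_mem)
  hence "p ! i \<in> {1..n}" "p ! Suc i \<in> {1..n}" using sp by blast+
  ultimately have "(p ! i, p ! Suc i) \<in> RC" using e by auto
  with Suc.IH Suc.prems show ?case by (meson Suc_lessD rtrancl.rtrancl_into_rtrancl)
qed

lemma good_step: assumes g: "good p" and h: "hd p \<notin> S" and k: "k \<in> I (hd p)"
  shows "good (k # p)"
proof -
  have len: "length p \<ge> 2" and pne: "p \<noteq> []" using g unfolding good_def by auto
  have sp: "set p \<subseteq> {1..n}" using good_set[OF g] .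
  have hdn: "hd p \<in> {1..n}" using sp hd_in_set[OF pne] by blast
  have kn: "k \<in> {1..n}" using I_sub[OF hdn] k by auto
  have edges: "\<forall>j. Suc j < length (k # p) \<longrightarrow> ((k # p) ! j, (k # p) ! Suc j) \<in> GE"
  proof (intro allI impI)
    fix j assume j: "Suc j < length (k # p)"
    show "((k # p) ! j, (k # p) ! Suc j) \<in> GE"
    proof (cases j)
      case 0 thus ?thesis using hdn k pne by (simp add: GE_iff hd_conv_nth)
    next
      case (Suc j') thus ?thesis using g j unfolding good_def by auto
    qed
  qed
  have inter: "\<forall>j. 0 < j \<and> j < length (k # p) - 1 \<longrightarrow> (k # p) ! j \<notin> S"
  proof (intro allI impI)
    fix j assume j: "0 < j \<and> j < length (k # p) - 1"
    then obtain j' where j': "j = Suc j'" by (cases j) auto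
    show "(k # p) ! j \<notin> S"
    proof (cases j')
      case 0 thus ?thesis using h pne j' by (simp add: hd_conv_nth)
    next
      case (Suc j'') thus ?thesis using g j j' unfolding good_def by auto
    qed
  qed
  have db: "distinct (butlast p)" using g h unfolding good_def by auto
  have dist: "k \<notin> S \<longrightarrow> distinct (butlast (k # p))"
  proof
    assume kS: "k \<notin> S"
    have "k \<notin> set (butlast p)"
    proof
      assume "k \<in> set (butlast p)"
      then obtain i where i0: "i < length (butlast p)" "k = butlast p ! i" by (metis in_set_conv_nth)
      hence i: "i < length p - 1" "k = p ! i" by (auto simp: nth_butlast)
      have r1: "(hd p, k) \<in> RC\<^sup>*" using good_reach[OF g h i(1)] i(2) by simp
      have "(k, hd p) \<in> RC" using kS h kn hdn k by (auto simp: GE_iff)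
      hence "(hd p, hd p) \<in> RC\<^sup>+" using r1 by (meson rtrancl_into_trancl1)
      thus False using acyc unfolding acyclic_def by blast
    qed
    thus "distinct (butlast (k # p))" using db pne by simp
  qed
  show ?thesis unfolding good_def
    using len pne g edges inter dist db unfolding good_def by auto
qed

lemma good_branch: assumes g: "good p" and h: "hd p \<in> S" and l: "length p \<ge> 3"
  shows "p \<in> branches n I S"
proof -
  have pne: "p \<noteq> []" using l by auto
  have bne: "butlast p \<noteq> []" using l by (cases p) auto
  have tlp: "tl p = tl (butlast p) @ [last p]"
    using append_butlast_last_id[OF pne] bne by (metis tl_append2)
  have ls: "last p \<in> S" using g unfolding good_def by auto
  have dtl: "distinct (tl p)"
    using tlp good_interior[OF g] ls g unfolding good_def by auto
  have "distinct p \<or> (hd p = last p \<and> distinct (tl p))"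
  proof (cases "hd p = last p")
    case True thus ?thesis using dtl by auto
  next
    case False
    have "hd p \<notin> set (tl p)" using tlp good_interior[OF g] h False by auto
    hence "distinct (hd p # tl p)" using dtl by simp
    thus ?thesis using pne by simp
  qed
  thus ?thesis using g h unfolding branches_def is_branch_def good_def by auto
qed


end


context thm9 begin
definition zz :: "(nat \<Rightarrow> 'a) \<Rightarrow> nat \<Rightarrow> eidx \<Rightarrow> 'a" where
  "zz y t = restrict (\<lambda>q. case q of Inl j \<Rightarrow> (Fm ^^ t) y j | Inr (\<beta>, l) \<Rightarrow> (Fm ^^ (t - l)) y (hd \<beta>)) E"

lemma zz_Inl: "j \<in> S \<Longrightarrow> zz y t (Inl j) = (Fm ^^ t) y j"
  unfolding zz_def using E_Inl by simp

lemma zz_Inr: "Inr (\<beta>, l) \<in> E \<Longrightarrow> zz y t (Inr (\<beta>, l)) = (Fm ^^ (t - l)) y (hd \<beta>)"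
  unfolding zz_def by simp

lemma branch_hd: "\<beta> \<in> branches n I S \<Longrightarrow> hd \<beta> \<in> S"
  unfolding branches_def is_branch_def by auto

lemma exp_term_eq:
  assumes t: "n \<le> t"
  shows "good p \<Longrightarrow> N + length p = n + 3 \<Longrightarrow>
     exp_term S I f N p (zz y t) = (Fm ^^ (t + 2 - length p)) y (hd p)"
proof (induction N arbitrary: p)
  case 0
  thus ?case using good_len(1)[OF 0(1)] by simp
next
  case (Suc N)
  note g = Suc.prems(1)
  have len: "length p \<ge> 2" using g unfolding good_def by auto
  have pne: "p \<noteq> []" using len by auto
  show ?case
  proof (cases "hd p \<in> S")
    case True
    show ?thesis
    proof (cases "length p \<le> 2")
      case True2: True
      hence "length p = 2" using len by simp
      thus ?thesis using True True2 by (simp add: zz_Inl)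
    next
      case False
      have l3: "length p \<ge> 3" using False by simp
      have "Inr (p, length p - 2) \<in> E"
        using good_branch[OF g True l3] l3 by (simp add: E_Inr)
      moreover have "t - (length p - 2) = t + 2 - length p"
        using good_len(1)[OF g] t n_pos l3 by linarith
      ultimately show ?thesis using True False by (simp add: zz_Inr)
    qed
  next
    case False
    have lp: "length p \<le> n" using good_len(2)[OF g False] .
    have hdn: "hd p \<in> {1..n}" using good_set[OF g] hd_in_set[OF pne] by blast
    have "restrict (\<lambda>k. exp_term S I f N (k # p) (zz y t)) (I (hd p))
        = restrict ((Fm ^^ (t + 1 - length p)) y) (I (hd p))"
    proof (rule restrict_ext)
      fix k assume k: "k \<in> I (hd p)"
      have "exp_term S I f N (k # p) (zz y t) = (Fm ^^ (t + 2 - length (k # p))) y (hd (k # p))"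
        using Suc.IH[OF good_step[OF g False k]] Suc.prems(2) by simp
      thus "exp_term S I f N (k # p) (zz y t) = (Fm ^^ (t + 1 - length p)) y k" by simp
    qed
    moreover have "t + 2 - length p = Suc (t + 1 - length p)" using lp t by simp
    ultimately show ?thesis using False Fpow_Suc[OF hdn, of "t + 1 - length p" y] by simp
  qed
qed

lemma zz_in: assumes y: "y \<in> XX" shows "zz y t \<in> PiE E (exp_fam X)"
  unfolding zz_def restrict_PiE_iff
proof
  fix q assume q: "q \<in> E"
  show "(case q of Inl j \<Rightarrow> (Fm ^^ t) y j | Inr (\<beta>, l) \<Rightarrow> (Fm ^^ (t - l)) y (hd \<beta>)) \<in> exp_fam X q"
  proof (cases q)
    case (Inl j)
    hence "j \<in> {1..n}" using q E_Inl S_sub by auto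
    thus ?thesis using Inl Fpow_in[OF y] PiE_mem by (fastforce simp: exp_fam_def)
  next
    case (Inr b)
    then obtain \<beta> l where b: "q = Inr (\<beta>, l)" by (cases b) auto
    hence "\<beta> \<in> branches n I S" using q E_Inr by auto
    hence "hd \<beta> \<in> {1..n}" using branch_hd S_sub by blast
    thus ?thesis using b Fpow_in[OF y] PiE_mem by (fastforce simp: exp_fam_def)
  qed
qed

lemma good2: assumes "j \<in> S" "k \<in> I j" shows "good [k, j]"
proof -
  have "j \<in> {1..n}" using assms S_sub by auto
  hence "(k, j) \<in> GE" using assms by (simp add: GE_iff)
  moreover have "\<And>k'. Suc k' < 2 \<Longrightarrow> k' = 0" by simp
  ultimately show ?thesis unfolding good_def using assms by (auto simp: less_Suc_eq)
qed

lemma zz_step: assumes y: "y \<in> XX" and t: "n \<le> t"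
  shows "expansion n S I f (zz y t) = zz y (Suc t)"
  unfolding expansion_def zz_def[of y "Suc t"]
proof (rule restrict_ext)
  fix q assume q: "q \<in> E"
  show "(case q of Inl j \<Rightarrow> tilde_F n S I f j (zz y t)
           | Inr (\<beta>, l) \<Rightarrow> if l = 1 then zz y t (Inl (hd \<beta>)) else zz y t (Inr (\<beta>, l - 1))) =
        (case q of Inl j \<Rightarrow> (Fm ^^ Suc t) y j | Inr (\<beta>, l) \<Rightarrow> (Fm ^^ (Suc t - l)) y (hd \<beta>))"
  proof (cases q)
    case (Inl j)
    hence jS: "j \<in> S" using q E_Inl by auto
    hence jn: "j \<in> {1..n}" using S_sub by auto
    have "restrict (\<lambda>k. exp_term S I f (n + 1) [k, j] (zz y t)) (I j) = restrict ((Fm ^^ t) y) (I j)"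
    proof (rule restrict_ext)
      fix k assume k: "k \<in> I j"
      have "n + 1 + length [k, j] = n + 3" by simp
      from exp_term_eq[OF t good2[OF jS k] this]
      show "exp_term S I f (n + 1) [k, j] (zz y t) = (Fm ^^ t) y k" by (simp del: exp_term.simps)
    qed
    hence "tilde_F n S I f j (zz y t) = (Fm ^^ Suc t) y j"
      unfolding tilde_F_def Fpow_Suc[OF jn] by (rule arg_cong)
    thus ?thesis using Inl by (simp del: exp_term.simps)
  next
    case (Inr b)
    then obtain \<beta> l where b: "q = Inr (\<beta>, l)" by (cases b) auto
    have br: "\<beta> \<in> branches n I S" "1 \<le> l" "l \<le> length \<beta> - 2" using q b E_Inr by auto
    show ?thesis
    proof (cases "l = 1")
      case True
      have "zz y t (Inl (hd \<beta>)) = (Fm ^^ (Suc t - l)) y (hd \<beta>)"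
        using zz_Inl[OF branch_hd[OF br(1)], of y t] True by simp
      thus ?thesis using b True by simp
    next
      case False
      have "1 \<le> l - 1" "l - 1 \<le> length \<beta> - 2" using br False by linarith+
      hence mem: "Inr (\<beta>, l - 1) \<in> E" using br by (simp add: E_Inr)
      have eq: "Suc t - l = t - (l - 1)" using br by linarith
      have "zz y t (Inr (\<beta>, l - 1)) = (Fm ^^ (Suc t - l)) y (hd \<beta>)"
        by (simp only: zz_Inr[OF mem] eq)
      thus ?thesis using b False by simp
    qed
  qed
qed



lemma branch_props: assumes "\<beta> \<in> branches n I S"
  shows "set \<beta> \<subseteq> {1..n}" "length \<beta> \<le> n + 1"
proof -
  have b: "length \<beta> \<ge> 2" "\<forall>k. Suc k < length \<beta> \<longrightarrow> (\<beta> ! k, \<beta> ! Suc k) \<in> GE"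
    "distinct \<beta> \<or> (hd \<beta> = last \<beta> \<and> distinct (tl \<beta>))"
    using assms unfolding branches_def is_branch_def by auto
  show sb: "set \<beta> \<subseteq> {1..n}"
  proof
    fix x assume "x \<in> set \<beta>"
    then obtain k where k: "k < length \<beta>" "x = \<beta> ! k" by (auto simp: in_set_conv_nth)
    show "x \<in> {1..n}"
    proof (cases "Suc k < length \<beta>")
      case True
      hence "(\<beta> ! k, \<beta> ! Suc k) \<in> GE" using b by blast
      hence "\<beta> ! Suc k \<in> {1..n}" "\<beta> ! k \<in> I (\<beta> ! Suc k)" by (auto simp: GE_iff)
      thus ?thesis using k I_sub by blast
    next
      case False
      hence "Suc (k - 1) < length \<beta>" "Suc (k-1) = k" using b k by auto
      hence "(\<beta> ! (k-1), \<beta> ! k) \<in> GE" using b by metis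
      thus ?thesis using k by (auto simp: GE_iff)
    qed
  qed
  have "distinct (tl \<beta>)" using b(3) by (metis distinct_tl)
  hence "length (tl \<beta>) = card (set (tl \<beta>))" by (simp add: distinct_card)
  also have "\<dots> \<le> card {1..n}"
  proof (rule card_mono)
    have "set (tl \<beta>) \<subseteq> set \<beta>" by (cases \<beta>) auto
    thus "set (tl \<beta>) \<subseteq> {1..n}" using sb by blast
  qed simp
  finally show "length \<beta> \<le> n + 1" by simp
qed

lemma finite_branches: "finite (branches n I S)"
proof (rule finite_subset)
  show "branches n I S \<subseteq> {xs. set xs \<subseteq> {1..n} \<and> length xs \<le> n + 1}"
    using branch_props by blast
  show "finite {xs. set xs \<subseteq> {1..n} \<and> length xs \<le> n + 1}"
    by (rule finite_lists_length_le) simp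
qed

lemma finite_E: "finite E"
proof (rule finite_subset)
  show "E \<subseteq> Inl ` S \<union> (\<lambda>(\<beta>, l). Inr (\<beta>, l)) ` (branches n I S \<times> {..n+1})"
  proof
    fix q assume "q \<in> E"
    then consider (a) j where "q = Inl j" "j \<in> S"
      | (b) \<beta> l where "q = Inr (\<beta>, l)" "\<beta> \<in> branches n I S" "l \<le> length \<beta> - 2"
      unfolding exp_idx_def by blast
    then show "q \<in> Inl ` S \<union> (\<lambda>(\<beta>, l). Inr (\<beta>, l)) ` (branches n I S \<times> {..n+1})"
    proof cases
      case a then show ?thesis by blast
    next
      case b
      hence "l \<le> n + 1" using branch_props(2)[OF b(2)] by linarith
      hence "(\<beta>, l) \<in> branches n I S \<times> {..n+1}" using b by auto
      show ?thesis by (rule UnI2, rule rev_image_eqI[OF \<open>(\<beta>, l) \<in> branches n I S \<times> {..n+1}\<close>]) (simp add: b(1))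
    qed
  qed
  show "finite (Inl ` S \<union> (\<lambda>(\<beta>, l). Inr (\<beta>, l)) ` (branches n I S \<times> {..n+1}))"
  proof (rule finite_UnI)
    have "finite S" using S_sub finite_subset by blast
    thus "finite (Inl ` S)" by (rule finite_imageI)
    show "finite ((\<lambda>(\<beta>, l). Inr (\<beta>, l)) ` (branches n I S \<times> {..n+1}))"
      by (intro finite_imageI finite_cartesian_product finite_branches finite_atMost)
  qed
qed

definition D :: real where "D = (\<Sum>i\<in>{1..n}. diameter (X i))"

lemma D_nn: "D \<ge> 0"
  unfolding D_def using cpt by (intro sum_nonneg diameter_ge_0) (auto intro: compact_imp_bounded)

lemma D_bound: assumes "u \<in> PiE E (exp_fam X)" "w \<in> PiE E (exp_fam X)" "q \<in> E"
  shows "dist (u q) (w q) \<le> D"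
proof -
  obtain i where i: "i \<in> {1..n}" "exp_fam X q = X i"
  proof (cases q)
    case (Inl j)
    hence "j \<in> {1..n}" using assms(3) E_Inl S_sub by auto
    thus ?thesis using that Inl by (simp add: exp_fam_def)
  next
    case (Inr b)
    then obtain \<beta> l where b: "q = Inr (\<beta>, l)" by (cases b) auto
    hence "\<beta> \<in> branches n I S" using assms(3) E_Inr by auto
    hence "hd \<beta> \<in> {1..n}" using branch_hd S_sub by blast
    thus ?thesis using that b by (simp add: exp_fam_def)
  qed
  have bd: "bounded (X i)" using cpt i by (auto intro: compact_imp_bounded)
  have "u q \<in> X i" "w q \<in> X i" using assms i by (auto simp: PiE_iff)
  hence "dist (u q) (w q) \<le> diameter (X i)" using diameter_bounded_bound[OF bd] by blast
  also have "\<dots> \<le> D" unfolding D_def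
  proof (rule member_le_sum)
    show "\<And>x. x \<in> {1..n} - {i} \<Longrightarrow> 0 \<le> diameter (X x)"
      using cpt diameter_ge_0 compact_imp_bounded by blast
  qed (use i in auto)
  finally show ?thesis .
qed

end


lemma tail_lemma:
  fixes r K \<epsilon> :: real
  assumes "0 < r" "r < 1" "0 \<le> K" "\<epsilon> > 0"
  shows "\<exists>M. \<forall>m\<ge>M. K * r ^ m < \<epsilon>"
proof -
  have "(\<lambda>m. K * r ^ m) \<longlonglongrightarrow> K * 0"
    by (rule tendsto_mult[OF tendsto_const LIMSEQ_power_zero]) (use assms in simp)
  hence "eventually (\<lambda>m. K * r ^ m < \<epsilon>) sequentially"
    using assms(4) by (intro order_tendstoD(2)) auto
  thus ?thesis unfolding eventually_sequentially by blast
qed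

context thm9 begin

lemma main_S: obtains K r where "0 \<le> K" "0 < r" "r < 1"
  "\<And>y y' j m. y \<in> XX \<Longrightarrow> y' \<in> XX \<Longrightarrow> j \<in> S \<Longrightarrow> dist ((Fm ^^ (n + m)) y j) ((Fm ^^ (n + m)) y' j) \<le> K * r ^ m"
proof -
  define N where "N = card E"
  define e where "e = idx_enum E"
  have "\<exists>h. bij_betw h {0..<card E} E" using finite_E by (rule ex_bij_betw_nat_finite)
  hence "\<exists>h. bij_betw h {..<N} E" unfolding N_def by (simp add: atLeast0LessThan)
  hence bij: "bij_betw e {..<N} E" unfolding e_def idx_enum_def N_def by (rule someI_ex)
  obtain j0 where "j0 \<in> S" using S_ne by blast
  hence "Inl j0 \<in> E" by (simp add: E_Inl)
  hence Npos: "N > 0" unfolding N_def using finite_E card_gt_0_iff by blast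
  have sr: "spectral_radius (mat N N (\<lambda>(a,b). complex_of_real (L (e a) (e b)))) < 1"
    using spr unfolding spec_rad_def N_def e_def .
  obtain c r where cr: "0 \<le> c" "0 < r" "r < 1"
    and bnd: "\<And>m a b. a < N \<Longrightarrow> b < N \<Longrightarrow> Rpow (\<lambda>a b. L (e a) (e b)) N m a b \<le> c * r^m"
    using spec_decay[of N "\<lambda>a b. L (e a) (e b)", OF Npos sr] by blast
  have Lnn: "\<forall>p\<in>E. \<forall>q\<in>E. L p q \<ge> 0" using lip unfolding lipschitz_constants_def by blast
  have Llip: "\<And>u w q. u \<in> PiE E (exp_fam X) \<Longrightarrow> w \<in> PiE E (exp_fam X) \<Longrightarrow> q \<in> E \<Longrightarrow>
      dist (expansion n S I f u q) (expansion n S I f w q) \<le> (\<Sum>p\<in>E. L p q * dist (u p) (w p))"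
    using lip unfolding lipschitz_constants_def by blast
  define K where "K = D * (real N * c)"
  have K0: "0 \<le> K" unfolding K_def using D_nn cr by simp
  have "dist ((Fm ^^ (n + m)) y j) ((Fm ^^ (n + m)) y' j) \<le> K * r ^ m"
    if y: "y \<in> XX" and y': "y' \<in> XX" and j: "j \<in> S" for y y' j m
  proof -
    define d where "d m q = dist (zz y (n + m) q) (zz y' (n + m) q)" for m q
    have step: "\<forall>m. \<forall>q\<in>E. d (Suc m) q \<le> (\<Sum>p\<in>E. L p q * d m p)"
    proof (intro allI ballI)
      fix m q assume q: "q \<in> E"
      have "zz y (n + Suc m) = expansion n S I f (zz y (n + m))"
        using zz_step[OF y, of "n + m"] by simp
      moreover have "zz y' (n + Suc m) = expansion n S I f (zz y' (n + m))"
        using zz_step[OF y', of "n + m"] by simp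
      ultimately show "d (Suc m) q \<le> (\<Sum>p\<in>E. L p q * d m p)"
        unfolding d_def using Llip[OF zz_in[OF y] zz_in[OF y'] q] by simp
    qed
    have d0: "\<forall>q\<in>E. d 0 q \<le> D" unfolding d_def using D_bound zz_in y y' by blast
    have db: "\<forall>b<N. d m (e b) \<le> D * (\<Sum>a<N. Rpow (\<lambda>a b. L (e a) (e b)) N m a b)"
      by (rule decay_bound[OF bij Lnn step d0 D_nn])
    have "Inl j \<in> E" using j by (simp add: E_Inl)
    hence "Inl j \<in> e ` {..<N}" using bij_betw_imp_surj_on[OF bij] by simp
    then obtain b where b0: "b \<in> {..<N}" "Inl j = e b" by (rule imageE)
    hence b: "b < N" "e b = Inl j" by auto
    have "(\<Sum>a<N. Rpow (\<lambda>a b. L (e a) (e b)) N m a b) \<le> (\<Sum>a<N. c * r^m)"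
      by (rule sum_mono) (use bnd b in auto)
    also have "\<dots> = real N * c * r^m" by simp
    finally have "D * (\<Sum>a<N. Rpow (\<lambda>a b. L (e a) (e b)) N m a b) \<le> D * (real N * c * r^m)"
      using D_nn by (rule mult_left_mono)
    moreover have "d m (Inl j) \<le> D * (\<Sum>a<N. Rpow (\<lambda>a b. L (e a) (e b)) N m a b)" using db b by metis
    ultimately have "d m (Inl j) \<le> K * r^m" unfolding K_def by (simp add: mult_ac)
    thus ?thesis unfolding d_def using zz_Inl[OF j] by simp
  qed
  thus ?thesis using that[OF K0 cr(2) cr(3)] by blast
qed


definition unif :: "nat \<Rightarrow> bool" where
  "unif i \<longleftrightarrow> (\<forall>\<epsilon>>0. eventually (\<lambda>t. \<forall>y\<in>XX. \<forall>y'\<in>XX. dist ((Fm ^^ t) y i) ((Fm ^^ t) y' i) < \<epsilon>) sequentially)"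

lemma unif_S: assumes j: "j \<in> S" shows "unif j"
  unfolding unif_def eventually_sequentially
proof (intro allI impI)
  fix \<epsilon> :: real assume \<epsilon>: "\<epsilon> > 0"
  obtain K r where Kr: "0 \<le> K" "0 < r" "r < 1"
    and bnd: "\<And>y y' j m. y \<in> XX \<Longrightarrow> y' \<in> XX \<Longrightarrow> j \<in> S \<Longrightarrow> dist ((Fm ^^ (n + m)) y j) ((Fm ^^ (n + m)) y' j) \<le> K * r ^ m"
    using main_S by metis
  from tail_lemma[OF Kr(2,3,1) \<epsilon>] obtain M where M: "\<forall>m\<ge>M. K * r ^ m < \<epsilon>" by (elim exE)
  have "\<forall>t\<ge>n + M. \<forall>y\<in>XX. \<forall>y'\<in>XX. dist ((Fm ^^ t) y j) ((Fm ^^ t) y' j) < \<epsilon>"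
  proof (intro allI impI ballI)
    fix t y y' assume t: "n + M \<le> t" and y: "y \<in> XX" and y': "y' \<in> XX"
    have "\<exists>m. t = n + m \<and> M \<le> m" using t by presburger
    then obtain m where tm: "t = n + m" "M \<le> m" by blast
    have "dist ((Fm ^^ (n + m)) y j) ((Fm ^^ (n + m)) y' j) \<le> K * r ^ m"
      by (rule bnd[OF y y' j])
    also have "\<dots> < \<epsilon>" using M tm(2) by blast
    finally show "dist ((Fm ^^ t) y j) ((Fm ^^ t) y' j) < \<epsilon>" unfolding tm(1) .
  qed
  thus "\<exists>N. \<forall>t\<ge>N. \<forall>y\<in>XX. \<forall>y'\<in>XX. dist ((Fm ^^ t) y j) ((Fm ^^ t) y' j) < \<epsilon>" by (rule exI)
qed



lemma unif_all: "i \<in> {1..n} \<Longrightarrow> unif i"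
proof -
  have "finite RC" by (rule finite_subset[of _ "{1..n} \<times> {1..n}"]) auto
  hence wf: "wf RC" using acyc by (rule finite_acyclic_wf)
  have "i \<in> {1..n} \<longrightarrow> unif i"
  proof (induction i rule: wf_induct_rule[OF wf])
    case (1 i)
    show ?case
    proof
      assume i: "i \<in> {1..n}"
      show "unif i"
      proof (cases "i \<in> S")
        case True thus ?thesis by (rule unif_S)
      next
        case False
        have Isub: "I i \<subseteq> {1..n}" using I_sub[OF i] .
        have finI: "finite (I i)" using Isub finite_subset by blast
        have uk: "\<forall>k\<in>I i. unif k"
        proof
          fix k assume k: "k \<in> I i"
          hence kn: "k \<in> {1..n}" using Isub by blast
          show "unif k"
          proof (cases "k \<in> S")
            case True thus ?thesis by (rule unif_S)
          next
            case False2: False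
            have "(k, i) \<in> RC" using k kn i False False2 by (auto simp: GE_iff)
            thus ?thesis using 1 kn by blast
          qed
        qed
        show ?thesis unfolding unif_def
        proof (intro allI impI)
          fix \<epsilon> :: real assume \<epsilon>: "\<epsilon> > 0"
          define C where "C = 1 + (\<Sum>k\<in>I i. Lam k i)"
          have Lnn: "\<And>k. k \<in> I i \<Longrightarrow> 0 \<le> Lam k i" using Lam_nn Isub i by blast
          have "0 \<le> (\<Sum>k\<in>I i. Lam k i)" using Lnn by (rule sum_nonneg)
          hence C: "C > 0" unfolding C_def by linarith
          define \<delta> where "\<delta> = \<epsilon> / C"
          have \<delta>: "\<delta> > 0" unfolding \<delta>_def using \<epsilon> C by simp
          have "\<forall>k\<in>I i. eventually (\<lambda>t. \<forall>y\<in>XX. \<forall>y'\<in>XX. dist ((Fm ^^ t) y k) ((Fm ^^ t) y' k) < \<delta>) sequentially"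
            using uk \<delta> unfolding unif_def by blast
          hence ev: "eventually (\<lambda>t. \<forall>k\<in>I i. \<forall>y\<in>XX. \<forall>y'\<in>XX. dist ((Fm ^^ t) y k) ((Fm ^^ t) y' k) < \<delta>) sequentially"
            by (rule eventually_ball_finite[OF finI])
          have "eventually (\<lambda>t. \<forall>y\<in>XX. \<forall>y'\<in>XX. dist ((Fm ^^ Suc t) y i) ((Fm ^^ Suc t) y' i) < \<epsilon>) sequentially"
          proof (rule eventually_mono[OF ev], intro ballI)
            fix t y y'
            assume P: "\<forall>k\<in>I i. \<forall>y\<in>XX. \<forall>y'\<in>XX. dist ((Fm ^^ t) y k) ((Fm ^^ t) y' k) < \<delta>"
              and y: "y \<in> XX" and y': "y' \<in> XX"
            have "dist ((Fm ^^ Suc t) y i) ((Fm ^^ Suc t) y' i)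
                = dist (f i (restrict ((Fm ^^ t) y) (I i))) (f i (restrict ((Fm ^^ t) y') (I i)))"
              using Fpow_Suc[OF i] by simp
            also have "\<dots> \<le> (\<Sum>k\<in>I i. Lam k i * dist (restrict ((Fm ^^ t) y) (I i) k) (restrict ((Fm ^^ t) y') (I i) k))"
              by (rule f_lip[OF i restrict_in[OF Fpow_in[OF y] i] restrict_in[OF Fpow_in[OF y'] i]])
            also have "\<dots> = (\<Sum>k\<in>I i. Lam k i * dist ((Fm ^^ t) y k) ((Fm ^^ t) y' k))"
              by (rule sum.cong) auto
            also have "\<dots> \<le> (\<Sum>k\<in>I i. Lam k i * \<delta>)"
            proof (rule sum_mono)
              fix k assume k: "k \<in> I i"
              show "Lam k i * dist ((Fm ^^ t) y k) ((Fm ^^ t) y' k) \<le> Lam k i * \<delta>"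
                using P k y y' Lnn[OF k] by (intro mult_left_mono) (auto intro: less_imp_le)
            qed
            also have "\<dots> = (\<Sum>k\<in>I i. Lam k i) * \<delta>" by (simp add: sum_distrib_right)
            also have "\<dots> < C * \<delta>" unfolding C_def using \<delta> by simp
            also have "\<dots> = \<epsilon>" unfolding \<delta>_def using C by simp
            finally show "dist ((Fm ^^ Suc t) y i) ((Fm ^^ Suc t) y' i) < \<epsilon>" .
          qed
          thus "eventually (\<lambda>t. \<forall>y\<in>XX. \<forall>y'\<in>XX. dist ((Fm ^^ t) y i) ((Fm ^^ t) y' i) < \<epsilon>) sequentially"
            by (rule iffD1[OF eventually_sequentially_Suc[of "\<lambda>t. \<forall>y\<in>XX. \<forall>y'\<in>XX. dist ((Fm ^^ t) y i) ((Fm ^^ t) y' i) < \<epsilon>"]])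
        qed
      qed
    qed
  qed
  thus "i \<in> {1..n} \<Longrightarrow> unif i" by blast
qed


lemma shift: assumes "m \<le> k" shows "(Fm ^^ k) y = (Fm ^^ m) ((Fm ^^ (k - m)) y)"
proof -
  have "(Fm ^^ (m + (k - m))) y = (Fm ^^ m) ((Fm ^^ (k - m)) y)" by (simp add: funpow_add)
  moreover have "m + (k - m) = k" using assms by simp
  ultimately show ?thesis by simp
qed

lemma coord_cauchy: assumes y: "y \<in> XX" and i: "i \<in> {1..n}"
  shows "Cauchy (\<lambda>t. (Fm ^^ t) y i)"
  unfolding Cauchy_def
proof (intro allI impI)
  fix e :: real assume e: "e > 0"
  have "eventually (\<lambda>t. \<forall>y\<in>XX. \<forall>y'\<in>XX. dist ((Fm ^^ t) y i) ((Fm ^^ t) y' i) < e) sequentially"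
    using unif_all[OF i] e unfolding unif_def by blast
  then obtain T where T: "\<And>t. t \<ge> T \<Longrightarrow> \<forall>y\<in>XX. \<forall>y'\<in>XX. dist ((Fm ^^ t) y i) ((Fm ^^ t) y' i) < e"
    unfolding eventually_sequentially by blast
  have "\<forall>m\<ge>T. \<forall>k\<ge>T. dist ((Fm ^^ m) y i) ((Fm ^^ k) y i) < e"
  proof (intro allI impI)
    fix m k assume m: "m \<ge> T" and k: "k \<ge> T"
    show "dist ((Fm ^^ m) y i) ((Fm ^^ k) y i) < e"
    proof (cases "m \<le> k")
      case True
      have y2: "(Fm ^^ (k - m)) y \<in> XX" by (rule Fpow_in[OF y])
      have "dist ((Fm ^^ m) y i) ((Fm ^^ m) ((Fm ^^ (k - m)) y) i) < e" using T[OF m] y y2 by blast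
      thus ?thesis using shift[OF True, of y] by simp
    next
      case False
      hence kl: "k \<le> m" by simp
      have y2: "(Fm ^^ (m - k)) y \<in> XX" by (rule Fpow_in[OF y])
      have "dist ((Fm ^^ k) ((Fm ^^ (m - k)) y) i) ((Fm ^^ k) y i) < e" using T[OF k] y y2 by blast
      thus ?thesis using shift[OF kl, of y] by simp
    qed
  qed
  thus "\<exists>M. \<forall>m\<ge>M. \<forall>k\<ge>M. dist ((Fm ^^ m) y i) ((Fm ^^ k) y i) < e" by (rule exI)
qed

end


context thm9 begin

lemma final: "\<exists>xbar\<in>XX. Fm xbar = xbar \<and>
   (\<forall>y\<in>XX. (\<lambda>k. dmax n ((Fm ^^ k) y) xbar) \<longlonglongrightarrow> 0)"
proof -
  have "XX \<noteq> {}" using cpt by (simp add: PiE_eq_empty_iff)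
  then obtain y0 where y0: "y0 \<in> XX" by blast
  have "\<forall>i\<in>{1..n}. \<exists>l. l \<in> X i \<and> (\<lambda>t. (Fm ^^ t) y0 i) \<longlonglongrightarrow> l"
  proof
    fix i assume i: "i \<in> {1..n}"
    have c: "complete (X i)" using cpt i compact_imp_complete by blast
    have "\<forall>t. (Fm ^^ t) y0 i \<in> X i" using Fpow_in[OF y0] i by (auto simp: PiE_iff)
    from completeE[OF c this coord_cauchy[OF y0 i]]
    show "\<exists>l. l \<in> X i \<and> (\<lambda>t. (Fm ^^ t) y0 i) \<longlonglongrightarrow> l" by blast
  qed
  then obtain g where g: "\<And>i. i \<in> {1..n} \<Longrightarrow> g i \<in> X i \<and> (\<lambda>t. (Fm ^^ t) y0 i) \<longlonglongrightarrow> g i"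
    by metis
  define xbar where "xbar = restrict g {1..n}"
  have xin: "xbar \<in> XX" unfolding xbar_def restrict_PiE_iff using g by blast
  have lim: "\<And>i. i \<in> {1..n} \<Longrightarrow> (\<lambda>t. (Fm ^^ t) y0 i) \<longlonglongrightarrow> xbar i"
    unfolding xbar_def using g by simp
  have fx: "f j (restrict xbar (I j)) = xbar j" if j: "j \<in> {1..n}" for j
  proof -
    have A: "(\<lambda>t. (Fm ^^ Suc t) y0 j) \<longlonglongrightarrow> xbar j"
      using LIMSEQ_Suc[OF lim[OF j]] .
    have Isub: "I j \<subseteq> {1..n}" by (rule I_sub[OF j])
    have "(\<lambda>t. dist ((Fm ^^ Suc t) y0 j) (f j (restrict xbar (I j)))) \<longlonglongrightarrow> 0"
    proof (rule Lim_null_comparison)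
      show "eventually (\<lambda>t. norm (dist ((Fm ^^ Suc t) y0 j) (f j (restrict xbar (I j))))
             \<le> (\<Sum>k\<in>I j. Lam k j * dist ((Fm ^^ t) y0 k) (xbar k))) sequentially"
      proof (rule always_eventually, rule allI)
        fix t
        have "norm (dist ((Fm ^^ Suc t) y0 j) (f j (restrict xbar (I j))))
            = dist (f j (restrict ((Fm ^^ t) y0) (I j))) (f j (restrict xbar (I j)))"
          using Fpow_Suc[OF j] by simp
        also have "\<dots> \<le> (\<Sum>k\<in>I j. Lam k j * dist (restrict ((Fm ^^ t) y0) (I j) k) (restrict xbar (I j) k))"
          by (rule f_lip[OF j restrict_in[OF Fpow_in[OF y0] j] restrict_in[OF xin j]])
        also have "\<dots> = (\<Sum>k\<in>I j. Lam k j * dist ((Fm ^^ t) y0 k) (xbar k))"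
          by (rule sum.cong) auto
        finally show "norm (dist ((Fm ^^ Suc t) y0 j) (f j (restrict xbar (I j))))
             \<le> (\<Sum>k\<in>I j. Lam k j * dist ((Fm ^^ t) y0 k) (xbar k))" .
      qed
      show "(\<lambda>t. \<Sum>k\<in>I j. Lam k j * dist ((Fm ^^ t) y0 k) (xbar k)) \<longlonglongrightarrow> 0"
      proof (rule tendsto_null_sum)
        fix k assume k: "k \<in> I j"
        hence kn: "k \<in> {1..n}" using Isub by blast
        have "(\<lambda>t. dist ((Fm ^^ t) y0 k) (xbar k)) \<longlonglongrightarrow> 0"
          using lim[OF kn] by (rule tendsto_dist_iff[THEN iffD1])
        thus "(\<lambda>t. Lam k j * dist ((Fm ^^ t) y0 k) (xbar k)) \<longlonglongrightarrow> 0"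
          by (rule tendsto_mult_right_zero)
      qed
    qed
    hence B: "(\<lambda>t. (Fm ^^ Suc t) y0 j) \<longlonglongrightarrow> f j (restrict xbar (I j))"
      by (rule tendsto_dist_iff[THEN iffD2])
    show ?thesis using LIMSEQ_unique[OF B A] .
  qed
  have fixp: "Fm xbar = xbar"
  proof
    fix j
    show "Fm xbar j = xbar j"
    proof (cases "j \<in> {1..n}")
      case True thus ?thesis using fx[OF True] by (simp add: interaction_map_def)
    next
      case False
      have "Fm xbar j = undefined" unfolding interaction_map_def using False by (auto simp: restrict_def)
      moreover have "xbar j = undefined" unfolding xbar_def using False by (auto simp: restrict_def)
      ultimately show ?thesis by simp
    qed
  qed
  have fixk: "(Fm ^^ k) xbar = xbar" for k
    by (induction k) (simp_all add: fixp)
  have conv: "(\<lambda>k. dmax n ((Fm ^^ k) y) xbar) \<longlonglongrightarrow> 0" if y: "y \<in> XX" for y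
    unfolding lim_sequentially
  proof (intro allI impI)
    fix e :: real assume e: "e > 0"
    have "\<forall>i\<in>{1..n}. eventually (\<lambda>t. \<forall>y\<in>XX. \<forall>y'\<in>XX. dist ((Fm ^^ t) y i) ((Fm ^^ t) y' i) < e) sequentially"
      using unif_all e unfolding unif_def by blast
    hence "eventually (\<lambda>t. \<forall>i\<in>{1..n}. \<forall>y\<in>XX. \<forall>y'\<in>XX. dist ((Fm ^^ t) y i) ((Fm ^^ t) y' i) < e) sequentially"
      by (rule eventually_ball_finite[OF finite_atLeastAtMost])
    then obtain T where T: "\<And>t. t \<ge> T \<Longrightarrow> \<forall>i\<in>{1..n}. \<forall>y\<in>XX. \<forall>y'\<in>XX. dist ((Fm ^^ t) y i) ((Fm ^^ t) y' i) < e"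
      unfolding eventually_sequentially by blast
    have "\<forall>t\<ge>T. dist (dmax n ((Fm ^^ t) y) xbar) 0 < e"
    proof (intro allI impI)
      fix t assume t: "t \<ge> T"
      have ne: "(\<lambda>i. dist ((Fm ^^ t) y i) (xbar i)) ` {1..n} \<noteq> {}" using n_pos by auto
      have all: "\<forall>i\<in>{1..n}. dist ((Fm ^^ t) y i) (xbar i) < e"
      proof
        fix i assume i: "i \<in> {1..n}"
        have "dist ((Fm ^^ t) y i) ((Fm ^^ t) xbar i) < e" using T[OF t] i y xin by blast
        thus "dist ((Fm ^^ t) y i) (xbar i) < e" using fixk by simp
      qed
      have lt: "dmax n ((Fm ^^ t) y) xbar < e"
        unfolding dmax_def using all ne by (simp add: Max_less_iff)
      have "1 \<in> {1..n}" using n_pos by simp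
      hence "dist ((Fm ^^ t) y 1) (xbar 1) \<le> dmax n ((Fm ^^ t) y) xbar"
        unfolding dmax_def by (intro Max_ge) auto
      hence ge: "0 \<le> dmax n ((Fm ^^ t) y) xbar" using zero_le_dist order_trans by blast
      show "dist (dmax n ((Fm ^^ t) y) xbar) 0 < e" using lt ge by simp
    qed
    thus "\<exists>no. \<forall>t\<ge>no. dist (dmax n ((Fm ^^ t) y) xbar) 0 < e" by (rule exI)
  qed
  show ?thesis
  proof (rule bexI[OF _ xin], intro conjI ballI)
    show "Fm xbar = xbar" by (rule fixp)
    fix y assume "y \<in> XX"
    thus "(\<lambda>k. dmax n ((Fm ^^ k) y) xbar) \<longlonglongrightarrow> 0" by (rule conv)
  qed
qed

end


theorem theorem9:
  fixes n :: nat and X :: "nat \<Rightarrow> 'a::metric_space set" and I :: "nat \<Rightarrow> nat set"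
    and f :: "nat \<Rightarrow> (nat \<Rightarrow> 'a) \<Rightarrow> 'a" and Lam :: "nat \<Rightarrow> nat \<Rightarrow> real"
    and S :: "nat set" and L :: "eidx \<Rightarrow> eidx \<Rightarrow> real"
  assumes "\<forall>i\<in>{1..n}. compact (X i) \<and> X i \<noteq> {}"
    and "is_interaction n X I f Lam"
    and "st0 n I S"
    and "lipschitz_constants (exp_idx n I S) (exp_fam X) (exp_deps n I S) (expansion n S I f) L"
    and "spec_rad (exp_idx n I S) L < 1"
  shows "\<exists>xbar\<in>PiE {1..n} X. interaction_map n I f xbar = xbar \<and>
           (\<forall>y\<in>PiE {1..n} X.
              (\<lambda>k. dmax n ((interaction_map n I f ^^ k) y) xbar) \<longlonglongrightarrow> 0)"
proof -
  interpret thm9 n X I f Lam S L using assms by unfold_locales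
  show ?thesis by (rule final)
qed

end
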